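(* Let $h=\prod_{i=1}^{t}p_i^{s_i}$ with distinct primes $p_i$ and $s_i\ge1$, $m\le n$, and let $A=SDT\in\mathbb{Z}_h^{m\times n}$ where $S\in GL_m(\mathbb{Z}_h)$, $T\in GL_n(\mathbb{Z}_h)$ and $D=\mathrm{diag}(\prod_{i=1}^tp_i^{\alpha_{i1}},\ldots,\prod_{i=1}^tp_i^{\alpha_{im}})$ with $0\leq\alpha_{i1}\leq\cdots\leq\alpha_{im}\leq s_i$ for all $i$. Then the inner rank of $A$ equals $\max\{c\in\{1,\dots,m\}: (\alpha_{1c},\alpha_{2c},\ldots,\alpha_{tc})\neq(s_1,s_2,\ldots,s_t)\}$ (interpreted as $0$ if this set is empty).
   Context: For a commutative ring $R$ and nonzero $A\in R^{m\times n}$, the inner rank $\rho(A)$ is the least integer $r$ such that $A=BC$ with $B\in R^{m\times r}$, $C\in R^{r\times n}$; $\rho(0)=0$. $\mathrm{diag}(d_1,\ldots,d_m)$ for $m\le n$ denotes the $m\times n$ matrix with $d_1,\dots,d_m$ on the main diagonal and zeros elsewhere. *)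

theory Defs
  imports "Jordan_Normal_Form.Matrix" "Berlekamp_Zassenhaus.Finite_Field"
begin

text \<open>Inner rank over a commutative ring: least r with A = B C, B of size m x r,
  C of size r x n. For the zero matrix this is 0 (r = 0 gives the zero product).\<close>
definition inner_rank :: "'a::comm_ring_1 mat \<Rightarrow> nat" where
  "inner_rank A = (LEAST r. \<exists>B C. B \<in> carrier_mat (dim_row A) r \<and>
      C \<in> carrier_mat r (dim_col A) \<and> A = B * C)"

text \<open>diag(d_1,...,d_m) as an m x n matrix (0-based indices: entry (k,k) is d k).\<close>
definition diag_rect :: "nat \<Rightarrow> nat \<Rightarrow> (nat \<Rightarrow> 'a::zero) \<Rightarrow> 'a mat" where
  "diag_rect m n d = mat m n (\<lambda>(i,j). if i = j then d i else 0)"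

end

theory Submission
  imports Defs "Jordan_Normal_Form.Determinant"
begin
lemma mod_mult_left_cong_int: "(x::int) mod q = y mod q \<Longrightarrow> (a*x) mod q = (a*y) mod q"
  by (metis mod_mult_right_eq)

lemma sum_mod_cong_int: "(\<Sum>x\<in>P. f x mod q) = (\<Sum>x\<in>P. g x mod q) \<Longrightarrow> (sum f P) mod (q::int) = (sum g P) mod q"
  by (metis mod_sum_eq)

lemma det_zero_col:
  fixes A :: "'a::comm_ring_1 mat"
  assumes A: "A \<in> carrier_mat n n" and k: "k < n" and z: "\<And>i. i < n \<Longrightarrow> A $$ (i,k) = 0"
  shows "det A = 0"
proof -
  have "(\<Prod> i = 0 ..< n. A $$ (i, p i)) = 0" if p: "p permutes {0..<n}" for p
  proof -
    have i1: "inv_into UNIV p k \<in> {0..<n}" using permutes_in_image[OF permutes_inv[OF p, unfolded inv_def]] k by (simp add: inv_into_def)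
    have i2: "p (inv_into UNIV p k) = k" using permutes_inverses(1)[OF p] by simp
    show ?thesis by (rule prod_zero[OF _ bexI[OF _ i1]], simp, simp only: i2, rule z, insert i1, simp)
  qed
  hence "(\<Sum> p \<in> {p. p permutes {0..<n}}. signof p * (\<Prod> i = 0 ..< n. A $$ (i, p i))) = 0"
    by (intro sum.neutral, simp)
  thus ?thesis unfolding det_def'[OF A] .
qed
lemma det_cong_mod:
  fixes A B :: "int mat"
  assumes A: "A \<in> carrier_mat n n" and B: "B \<in> carrier_mat n n"
   and c: "\<And>i j. i < n \<Longrightarrow> j < n \<Longrightarrow> A $$ (i,j) mod q = B $$ (i,j) mod q"
  shows "det A mod q = det B mod q"
proof -
  have "(\<Prod> i = 0 ..< n. A $$ (i, p i)) mod q = (\<Prod> i = 0 ..< n. B $$ (i, p i)) mod q"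
    if p: "p permutes {0..<n}" for p
  proof -
    have "(\<Prod> i = 0 ..< n. A $$ (i, p i)) mod q = (\<Prod> i = 0 ..< n. A $$ (i, p i) mod q) mod q"
      by (simp add: mod_prod_eq)
    also have "\<dots> = (\<Prod> i = 0 ..< n. B $$ (i, p i) mod q) mod q"
      by (rule arg_cong[where f="\<lambda>x. x mod q"], rule prod.cong, insert c permutes_in_image[OF p], auto)
    also have "\<dots> = (\<Prod> i = 0 ..< n. B $$ (i, p i)) mod q" by (simp add: mod_prod_eq)
    finally show ?thesis .
  qed
  hence "(signof p * (\<Prod> i = 0 ..< n. A $$ (i, p i))) mod q = (signof p * (\<Prod> i = 0 ..< n. B $$ (i, p i))) mod q"
    if p: "p permutes {0..<n}" for p using p by (intro mod_mult_left_cong_int)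
  hence "(\<Sum> p \<in> {p. p permutes {0..<n}}. (signof p * (\<Prod> i = 0 ..< n. A $$ (i, p i))) mod q) =
    (\<Sum> p \<in> {p. p permutes {0..<n}}. (signof p * (\<Prod> i = 0 ..< n. B $$ (i, p i))) mod q)"
    by (intro sum.cong, auto)
  hence "(\<Sum> p \<in> {p. p permutes {0..<n}}. (signof p * (\<Prod> i = 0 ..< n. A $$ (i, p i)))) mod q =
    (\<Sum> p \<in> {p. p permutes {0..<n}}. (signof p * (\<Prod> i = 0 ..< n. B $$ (i, p i)))) mod q"
    by (rule sum_mod_cong_int)
  thus ?thesis unfolding det_def'[OF A] det_def'[OF B] .
qed

lemma of_int_mod_ring_eq0: "(of_int x :: 'a::nontriv mod_ring) = 0 \<longleftrightarrow> int CARD('a) dvd x"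
  unfolding of_int_of_int_mod_ring
  by (transfer, auto)

lemma core:
  fixes b c :: "nat \<Rightarrow> nat \<Rightarrow> 'a::nontriv mod_ring"
  assumes k: "k < r" and D: "D dvd CARD('a)" "D \<noteq> CARD('a)"
  and eq: "\<And>i j. i < r \<Longrightarrow> j < r \<Longrightarrow> (\<Sum>l<k. b i l * c l j) = (if i = j then of_nat D else 0)"
  shows False
proof -
  define h where "h = CARD('a)"
  have h0: "h > 0" unfolding h_def by simp
  obtain q where hq: "h = D * q" using D(1) unfolding h_def by (auto simp: dvd_def)
  have D0: "D > 0" using hq h0 by (cases D, auto)
  have q1: "q > 1" using hq h0 D(2) unfolding h_def[symmetric] by (cases q; cases "q - 1", auto)
  define Bi where "Bi = mat r r (\<lambda>(i,l). if l < k then to_int_mod_ring (b i l) else 0)"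
  define Ci where "Ci = mat r r (\<lambda>(l,j). if l < k then to_int_mod_ring (c l j) else 0)"
  have Bi: "Bi \<in> carrier_mat r r" and Ci: "Ci \<in> carrier_mat r r" unfolding Bi_def Ci_def by auto
  define X where "X = Bi * Ci"
  have X: "X \<in> carrier_mat r r" unfolding X_def using Bi Ci by auto
  have Xe: "X $$ (i,j) = (\<Sum>l<k. to_int_mod_ring (b i l) * to_int_mod_ring (c l j))" if ij: "i < r" "j < r" for i j
  proof -
    have "X $$ (i,j) = (\<Sum>l\<in>{0..<r}. (if l < k then to_int_mod_ring (b i l) else 0) * (if l < k then to_int_mod_ring (c l j) else 0))"
      unfolding X_def Bi_def Ci_def using ij by (simp add: scalar_prod_def)
    also have "\<dots> = (\<Sum>l\<in>{0..<k}. (if l < k then to_int_mod_ring (b i l) else 0) * (if l < k then to_int_mod_ring (c l j) else 0))"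
      by (rule sum.mono_neutral_right, insert k, auto)
    also have "\<dots> = (\<Sum>l<k. to_int_mod_ring (b i l) * to_int_mod_ring (c l j))"
      by (rule sum.cong, auto)
    finally show ?thesis .
  qed
  have Xd: "int h dvd X $$ (i,j) - (if i = j then int D else 0)" if ij: "i < r" "j < r" for i j
  proof -
    have "(of_int (X $$ (i,j)) :: 'a mod_ring) = (\<Sum>l<k. b i l * c l j)"
      unfolding Xe[OF ij] of_int_sum of_int_mult by (simp add: of_int_of_int_mod_ring)
    hence "(of_int (X $$ (i,j) - (if i = j then int D else 0)) :: 'a mod_ring) = 0"
      using eq[OF ij] by simp
    thus ?thesis unfolding of_int_mod_ring_eq0 h_def .
  qed
  define e where "e i j = (X $$ (i,j) - (if i = j then int D else 0)) div int h" for i j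
  define M where "M = mat r r (\<lambda>(i,j). (if i = j then 1 else 0) + int q * e i j)"
  have M: "M \<in> carrier_mat r r" unfolding M_def by auto
  have XM: "X = int D \<cdot>\<^sub>m M"
  proof (rule eq_matI)
    fix i j assume ij: "i < dim_row (int D \<cdot>\<^sub>m M)" "j < dim_col (int D \<cdot>\<^sub>m M)"
    hence ij: "i < r" "j < r" using M by auto
    have "X $$ (i,j) = (if i = j then int D else 0) + int h * e i j"
      unfolding e_def using Xd[OF ij] by auto
    thus "X $$ (i,j) = (int D \<cdot>\<^sub>m M) $$ (i,j)" unfolding M_def hq using ij
      by (auto simp: algebra_simps)
  qed (insert X M, auto)
  have "det Bi = 0" by (rule det_zero_col[OF Bi k], insert k, auto simp: Bi_def)
  hence "det X = 0" unfolding X_def using det_mult[OF Bi Ci] by simp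
  hence "int D ^ r * det M = 0" unfolding XM using M by simp
  hence dM: "det M = 0" using D0 by simp
  have "det M mod int q = det (1\<^sub>m r) mod int q"
    by (rule det_cong_mod[OF M], auto simp: M_def)
  hence "0 = 1 mod int q" using dM by simp
  thus False using q1 by simp
qed

lemma of_nat_mod_ring_eq0: "(of_nat x :: 'a::nontriv mod_ring) = 0 \<longleftrightarrow> CARD('a) dvd x"
  using of_int_mod_ring_eq0[of "int x", where 'a='a] by simp

theorem lemma2p11:
  fixes t m n :: nat
    and p s :: "nat \<Rightarrow> nat"
    and \<alpha> :: "nat \<Rightarrow> nat \<Rightarrow> nat"
    and S T A :: "'h::nontriv mod_ring mat"
  assumes h_fact: "CARD('h) = (\<Prod>i\<in>{1..t}. p i ^ s i)"
    and primes: "\<forall>i\<in>{1..t}. prime (p i)"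
    and distinct: "inj_on p {1..t}"
    and s_pos: "\<forall>i\<in>{1..t}. s i \<ge> 1"
    and mn: "m \<le> n"
    and S: "S \<in> carrier_mat m m" "invertible_mat S"
    and T: "T \<in> carrier_mat n n" "invertible_mat T"
    and mono: "\<forall>i\<in>{1..t}. \<forall>c\<in>{1..<m}. \<alpha> i c \<le> \<alpha> i (Suc c)"
    and bound: "\<forall>i\<in>{1..t}. \<forall>c\<in>{1..m}. \<alpha> i c \<le> s i"
    and A: "A = S * diag_rect m n (\<lambda>k. of_nat (\<Prod>i\<in>{1..t}. p i ^ \<alpha> i (Suc k))) * T"
  shows "inner_rank A = Max ({0} \<union> {c\<in>{1..m}. (\<exists>i\<in>{1..t}. \<alpha> i c \<noteq> s i)})"
proof -
  define h where "h = CARD('h)"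
  define d where "d c = (\<Prod>i\<in>{1..t}. p i ^ \<alpha> i c)" for c
  define SS where "SS = {c\<in>{1..m}. (\<exists>i\<in>{1..t}. \<alpha> i c \<noteq> s i)}"
  define r where "r = Max ({0} \<union> SS)"
  have p1: "p i > 1" if "i \<in> {1..t}" for i using primes that prime_gt_1_nat by blast
  have h0: "h > 0" unfolding h_def by simp
  have p0: "p i > 0" if "i \<in> {1..t}" for i using p1[OF that] by simp
  have d0: "d c > 0" for c unfolding d_def using p0 by (intro prod_pos, auto)
  have F1: "d c dvd h" if c: "c \<in> {1..m}" for c
    unfolding d_def h_def h_fact
    by (rule prod_dvd_prod, rule le_imp_power_dvd, insert bound c, auto)
  have F2: "d c dvd d (Suc c)" if c: "c \<in> {1..<m}" for c
    unfolding d_def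
    by (rule prod_dvd_prod, rule le_imp_power_dvd, insert mono c, auto)
  have chain: "d c dvd d c'" if "1 \<le> c" "c \<le> c'" "c' \<le> m" for c c'
    using that(2,3)
  proof (induction c')
    case 0 thus ?case by simp
  next
    case (Suc c')
    show ?case
    proof (cases "c = Suc c'")
      case False
      hence "d c dvd d c'" using Suc by simp
      also have "d c' dvd d (Suc c')" using Suc False that(1) by (intro F2, auto)
      finally show ?thesis .
    qed simp
  qed
  have F3: "d c = h \<longleftrightarrow> (\<forall>i\<in>{1..t}. \<alpha> i c = s i)" if c: "c \<in> {1..m}" for c
  proof
    assume "\<forall>i\<in>{1..t}. \<alpha> i c = s i"
    thus "d c = h" unfolding d_def h_def h_fact by (intro prod.cong, auto)
  next
    assume dh: "d c = h"
    show "\<forall>i\<in>{1..t}. \<alpha> i c = s i"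
    proof (rule ccontr)
      assume "\<not> ?thesis"
      then obtain i0 where i0: "i0 \<in> {1..t}" "\<alpha> i0 c \<noteq> s i0" by auto
      define E where "E = (\<Prod>i\<in>{1..t}. p i ^ (s i - \<alpha> i c))"
      have "h = (\<Prod>i\<in>{1..t}. p i ^ \<alpha> i c * p i ^ (s i - \<alpha> i c))"
        unfolding h_def h_fact
        by (intro prod.cong refl, insert bound c, auto simp: power_add[symmetric])
      hence hE: "h = d c * E" unfolding d_def E_def prod.distrib .
      have "E = p i0 ^ (s i0 - \<alpha> i0 c) * (\<Prod>i\<in>{1..t} - {i0}. p i ^ (s i - \<alpha> i c))"
        unfolding E_def using i0 by (simp add: prod.remove)
      moreover have "p i0 ^ (s i0 - \<alpha> i0 c) > 1"
      proof -
        have "\<alpha> i0 c \<le> s i0" using bound i0(1) c by blast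
        hence "s i0 - \<alpha> i0 c > 0" using i0(2) by simp
        thus ?thesis using p1[OF i0(1)] by (intro one_less_power, auto)
      qed
      moreover have "(\<Prod>i\<in>{1..t} - {i0}. p i ^ (s i - \<alpha> i c)) > 0"
        using p0 by (intro prod_pos, auto)
      ultimately have "E > 1"
      proof -
        fix x y :: nat
        have gen: "E = x * y \<Longrightarrow> x > 1 \<Longrightarrow> y > 0 \<Longrightarrow> E > 1" for x y :: nat
        proof -
          assume a: "E = x * y" "x > 1" "y > 0"
          have "x \<le> x * y" using a by simp
          thus "E > 1" using a by linarith
        qed
        assume "E = p i0 ^ (s i0 - \<alpha> i0 c) * (\<Prod>i\<in>{1..t} - {i0}. p i ^ (s i - \<alpha> i c))"
          "p i0 ^ (s i0 - \<alpha> i0 c) > 1" "(\<Prod>i\<in>{1..t} - {i0}. p i ^ (s i - \<alpha> i c)) > 0"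
        thus "E > 1" by (rule gen)
      qed
      thus False using hE dh h0 by simp
    qed
  qed
  have finSS: "finite SS" unfolding SS_def by auto
  have rm: "r \<le> m" unfolding r_def SS_def by (subst Max_le_iff, auto)
  have F4: "c \<le> r \<longleftrightarrow> d c \<noteq> h" if c: "c \<in> {1..m}" for c
  proof
    assume "d c \<noteq> h"
    hence "c \<in> SS" unfolding SS_def using F3[OF c] c by auto
    thus "c \<le> r" unfolding r_def using finSS by auto
  next
    assume cr: "c \<le> r"
    have "r \<in> {0} \<union> SS" unfolding r_def using finSS by (intro Max_in, auto)
    hence rS: "r \<in> SS" using cr c by auto
    hence r1: "r \<in> {1..m}" unfolding SS_def by auto
    have "d r \<noteq> h" using rS F3[OF r1] unfolding SS_def by auto
    moreover have "d c dvd d r" using c cr rm by (intro chain, auto)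
    ultimately show "d c \<noteq> h" using F1[OF r1] by (metis dvd_antisym)
  qed
  define dd where "dd k = (of_nat (d (Suc k)) :: 'h mod_ring)" for k
  define Dg where "Dg = diag_rect m n dd"
  have AD: "A = S * Dg * T" unfolding A Dg_def dd_def d_def ..
  have Dg: "Dg \<in> carrier_mat m n" unfolding Dg_def diag_rect_def by auto
  have Dg_ij: "Dg $$ (i,j) = (if i = j then dd i else 0)" if "i < m" "j < n" for i j
    unfolding Dg_def diag_rect_def using that by auto
  have Acar: "A \<in> carrier_mat m n" unfolding AD using S T Dg by auto
  have dd0: "dd i = 0" if "i < m" "r \<le> i" for i
  proof -
    have "d (Suc i) = h" using F4[of "Suc i"] that by auto
    thus ?thesis unfolding dd_def h_def by simp
  qed
  define P where "P = (mat m r (\<lambda>(i,j). if i = j then 1 else 0) :: 'h mod_ring mat)"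
  define Q where "Q = mat r n (\<lambda>(i,j). if i = j then dd i else 0)"
  have P: "P \<in> carrier_mat m r" and Q: "Q \<in> carrier_mat r n" unfolding P_def Q_def by auto
  have PQ: "P * Q = Dg"
  proof (rule eq_matI)
    fix i j assume "i < dim_row Dg" "j < dim_col Dg"
    hence ij: "i < m" "j < n" using Dg by auto
    have "(P * Q) $$ (i,j) = (\<Sum>l\<in>{0..<r}. (if i = l then 1 else 0) * (if l = j then dd l else 0))"
      unfolding P_def Q_def using ij by (simp add: scalar_prod_def)
    also have "\<dots> = (\<Sum>l\<in>{0..<r}. if l = i then (if i = j then dd i else 0) else 0)"
      by (rule sum.cong, auto)
    also have "\<dots> = (if i < r then (if i = j then dd i else 0) else 0)"
      by (subst sum.delta, auto)
    also have "\<dots> = Dg $$ (i,j)" using Dg_ij[OF ij] dd0 ij by auto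
    finally show "(P * Q) $$ (i,j) = Dg $$ (i,j)" .
  qed (insert P Q Dg, auto)
  have PQc: "P * Q \<in> carrier_mat m n" using P Q by auto
  have Afac: "A = (S * P) * (Q * T)"
  proof -
    have "A = S * ((P * Q) * T)" unfolding AD PQ[symmetric] by (rule assoc_mult_mat[OF S(1) PQc T(1)])
    also have "(P * Q) * T = P * (Q * T)" by (rule assoc_mult_mat[OF P Q T(1)])
    also have "S * (P * (Q * T)) = (S * P) * (Q * T)"
      by (rule assoc_mult_mat[symmetric, OF S(1) P], insert Q T(1), auto)
    finally show ?thesis .
  qed
  have ub: "inner_rank A \<le> r"
    unfolding inner_rank_def
    by (rule Least_le, rule exI[of _ "S * P"], rule exI[of _ "Q * T"], insert Afac Acar S T P Q, auto)
  have "\<exists>B C. B \<in> carrier_mat (dim_row A) r \<and> C \<in> carrier_mat r (dim_col A) \<and> A = B * C"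
    by (rule exI[of _ "S * P"], rule exI[of _ "Q * T"], insert Afac Acar S T P Q, auto)
  hence "\<exists>B C. B \<in> carrier_mat (dim_row A) (inner_rank A) \<and> C \<in> carrier_mat (inner_rank A) (dim_col A) \<and> A = B * C"
    unfolding inner_rank_def by (rule LeastI)
  moreover have dA: "dim_row A = m" "dim_col A = n" using Acar by auto
  ultimately obtain B C where BC: "B \<in> carrier_mat m (inner_rank A)" "C \<in> carrier_mat (inner_rank A) n" "A = B * C"
    by metis
  define k where "k = inner_rank A"
  have lb: "\<not> k < r"
  proof
    assume kr: "k < r"
    from S(2) obtain S' where S': "S * S' = 1\<^sub>m m" "S' * S = 1\<^sub>m (dim_row S')"
      unfolding invertible_mat_def inverts_mat_def using S(1) by auto
    have S'c: "S' \<in> carrier_mat m m" using S' S(1)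
      by (metis carrier_matD carrier_matI index_mult_mat(2,3) index_one_mat(2,3))
    from T(2) obtain T' where T': "T * T' = 1\<^sub>m n" "T' * T = 1\<^sub>m (dim_row T')"
      unfolding invertible_mat_def inverts_mat_def using T(1) by auto
    have T'c: "T' \<in> carrier_mat n n" using T' T(1)
      by (metis carrier_matD carrier_matI index_mult_mat(2,3) index_one_mat(2,3))
    have S'S: "S' * S = 1\<^sub>m m" using S' S'c by auto
    define B1 where "B1 = S' * B"
    define C1 where "C1 = C * T'"
    have B1: "B1 \<in> carrier_mat m k" and C1: "C1 \<in> carrier_mat k n"
      unfolding B1_def C1_def k_def using BC S'c T'c by auto
    have "Dg = (S' * S) * Dg * (T * T')" using S'S T'(1) Dg by simp
    also have "\<dots> = S' * (S * Dg * T) * T'"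
      using S'c S(1) Dg T(1) T'c
      by (simp add: assoc_mult_mat[of _ m m _ m _ n] assoc_mult_mat[of _ m m _ n _ n])
    also have "\<dots> = S' * (B * C) * T'" unfolding AD[symmetric] BC(3) ..
    also have "\<dots> = S' * ((B * C) * T')"
      by (rule assoc_mult_mat[OF S'c _ T'c], insert BC, auto)
    also have "(B * C) * T' = B * (C * T')" by (rule assoc_mult_mat[OF BC(1,2) T'c])
    also have "S' * (B * (C * T')) = B1 * C1" unfolding B1_def C1_def
      by (rule assoc_mult_mat[symmetric, OF S'c BC(1)], insert BC T'c, auto)
    finally have DBC: "Dg = B1 * C1" .
    have r1: "r \<in> {1..m}" using kr rm by auto
    define b where "b i l = of_nat (d r div d (Suc i)) * B1 $$ (i,l)" for i l
    show False
    proof (rule core[of k r "d r" b "\<lambda>l j. C1 $$ (l,j)"])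
      show "k < r" by fact
      show "d r dvd CARD('h)" using F1[OF r1] unfolding h_def .
      show "d r \<noteq> CARD('h)" using F4[OF r1] unfolding h_def by simp
      fix i j assume ij: "i < r" "j < r"
      hence ij': "i < m" "j < n" using rm mn by auto
      have "(\<Sum>l<k. B1 $$ (i,l) * C1 $$ (l,j)) = Dg $$ (i,j)"
        unfolding DBC using B1 C1 ij' by (simp add: scalar_prod_def atLeast0LessThan)
      hence "(\<Sum>l<k. b i l * C1 $$ (l,j)) = of_nat (d r div d (Suc i)) * Dg $$ (i,j)"
        unfolding b_def mult.assoc sum_distrib_left[symmetric] by simp
      also have "\<dots> = (if i = j then of_nat (d r div d (Suc i) * d (Suc i)) else 0)"
        unfolding Dg_ij[OF ij'] dd_def by simp
      also have "d r div d (Suc i) * d (Suc i) = d r"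
        using chain[of "Suc i" r] ij rm by simp
      finally show "(\<Sum>l<k. b i l * C1 $$ (l,j)) = (if i = j then of_nat (d r) else 0)" .
    qed
  qed
  show ?thesis using ub lb unfolding k_def r_def SS_def by simp
qed
end
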